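(* There is no assignment rule (defined for profiles of every number $n$ of agents over alternatives $\{A,B\}$) that is both stable and strategyproof over the domain of all minimally-interleaving profiles.
   Context: Agents $V=\{v_1,\dots,v_n\}$; two alternatives $A,B$. Each agent $v_i$ has a strict total order $\succ_i$ on $\{A,B\}\times\{1,\dots,n\}$, where $(S,j)$ means being in the community adopting $S$ of size $j$; it is monotonic if $(S,j)\succ_i(S,k)$ whenever $k<j$. A preference is non-interleaving if it is monotonic and $(A,1)\succ(B,n)$ or $(B,1)\succ(A,n)$. A preference is minimally-interleaving if it is monotonic and either $(A,2)\succ(B,n)\succ(A,1)\succ(B,n-1)$ or $(B,2)\succ(A,n)\succ(B,1)\succ(A,n-1)$. A profile is minimally-interleaving if each of its orders is non-interleaving or minimally-interleaving. An assignment is a map $f:V\to\{A,B\}$; $v_i$ prefers $f$ to $g$ if $(f(v_i),|f^{-1}(f(v_i))|)\succ_i(g(v_i),|g^{-1}(g(v_i))|)$. An assignment $f$ is stable if there is no assignment $f'\neq f$ such that every agent $v_i$ with $f'(v_i)\neq f(v_i)$ prefers $f'$ to $f$. An assignment rule $R$ maps profiles to assignments; it is stable if $R(V)$ is stable whenever $V$ admits a stable assignment. $R$ is strategyproof over a domain $D$ if for every $V\in D$ with $f=R(V)$ there is no agent $v_i$ and monotonic order $\succ_i'$ such that, with $V'$ obtained by replacing $\succ_i$ by $\succ_i'$ and $f'=R(V')$, agent $v_i$ prefers $f'$ to $f$ according to her true order. *)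

theory Defs
  imports Main
begin

datatype alt = A | B

text \<open>A preference is a relation on alternatives-with-community-size;
  p x y means x is strictly preferred to y.\<close>
type_synonym pref = "alt \<times> nat \<Rightarrow> alt \<times> nat \<Rightarrow> bool"

definition outcomes :: "nat \<Rightarrow> (alt \<times> nat) set" where
  "outcomes n = UNIV \<times> {1..n}"

definition strict_total :: "nat \<Rightarrow> pref \<Rightarrow> bool" where
  "strict_total n p \<longleftrightarrow>
     (\<forall>x y. p x y \<longrightarrow> x \<in> outcomes n \<and> y \<in> outcomes n) \<and>
     (\<forall>x. \<not> p x x) \<and>
     (\<forall>x y z. p x y \<longrightarrow> p y z \<longrightarrow> p x z) \<and>
     (\<forall>x\<in>outcomes n. \<forall>y\<in>outcomes n. x \<noteq> y \<longrightarrow> p x y \<or> p y x)"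

definition monotonic :: "nat \<Rightarrow> pref \<Rightarrow> bool" where
  "monotonic n p \<longleftrightarrow> strict_total n p \<and>
     (\<forall>S j k. 1 \<le> k \<longrightarrow> k < j \<longrightarrow> j \<le> n \<longrightarrow> p (S, j) (S, k))"

definition non_interleaving :: "nat \<Rightarrow> pref \<Rightarrow> bool" where
  "non_interleaving n p \<longleftrightarrow> monotonic n p \<and> (p (A, 1) (B, n) \<or> p (B, 1) (A, n))"

definition minimally_interleaving :: "nat \<Rightarrow> pref \<Rightarrow> bool" where
  "minimally_interleaving n p \<longleftrightarrow> monotonic n p \<and>
     ((p (A, 2) (B, n) \<and> p (B, n) (A, 1) \<and> p (A, 1) (B, n - 1)) \<or>
      (p (B, 2) (A, n) \<and> p (A, n) (B, 1) \<and> p (B, 1) (A, n - 1)))"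

text \<open>A profile of n = length V agents; agent i (i < n) has order V ! i.\<close>
definition is_profile :: "pref list \<Rightarrow> bool" where
  "is_profile V \<longleftrightarrow> (\<forall>i < length V. strict_total (length V) (V ! i))"

definition MI_domain :: "pref list set" where
  "MI_domain = {V. is_profile V \<and>
     (\<forall>i < length V. non_interleaving (length V) (V ! i) \<or>
                     minimally_interleaving (length V) (V ! i))}"

text \<open>Assignments are functions nat => alt; only agents i < n matter.\<close>
definition comm_size :: "nat \<Rightarrow> (nat \<Rightarrow> alt) \<Rightarrow> nat \<Rightarrow> nat" where
  "comm_size n f i = card {j. j < n \<and> f j = f i}"

definition prefers :: "pref \<Rightarrow> nat \<Rightarrow> (nat \<Rightarrow> alt) \<Rightarrow> (nat \<Rightarrow> alt) \<Rightarrow> nat \<Rightarrow> bool" where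
  "prefers p n f g i \<longleftrightarrow> p (f i, comm_size n f i) (g i, comm_size n g i)"

definition stable :: "pref list \<Rightarrow> (nat \<Rightarrow> alt) \<Rightarrow> bool" where
  "stable V f \<longleftrightarrow> \<not> (\<exists>f'. (\<exists>i < length V. f' i \<noteq> f i) \<and>
       (\<forall>i < length V. f' i \<noteq> f i \<longrightarrow> prefers (V ! i) (length V) f' f i))"

type_synonym rule = "pref list \<Rightarrow> (nat \<Rightarrow> alt)"

definition stable_rule :: "rule \<Rightarrow> bool" where
  "stable_rule R \<longleftrightarrow> (\<forall>V. is_profile V \<and> (\<exists>f. stable V f) \<longrightarrow> stable V (R V))"

definition strategyproof :: "rule \<Rightarrow> pref list set \<Rightarrow> bool" where
  "strategyproof R D \<longleftrightarrow> (\<forall>V \<in> D. \<forall>i < length V. \<forall>q. monotonic (length V) q \<longrightarrow>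
      \<not> prefers (V ! i) (length V) (R (V[i := q])) (R V) i)"

end

theory Submission
  imports Defs
begin

definition mk :: "(alt \<times> nat \<Rightarrow> nat) \<Rightarrow> pref" where
  "mk r x y \<longleftrightarrow> x \<in> outcomes 2 \<and> y \<in> outcomes 2 \<and> r y < r x"

definition ra :: "alt \<times> nat \<Rightarrow> nat" where
  "ra x = (if x = (A,2) then 4 else if x = (B,2) then 3 else if x = (A,1) then 2 else 1)"
definition rb :: "alt \<times> nat \<Rightarrow> nat" where
  "rb x = (if x = (B,2) then 4 else if x = (A,2) then 3 else if x = (B,1) then 2 else 1)"
definition ralpha :: "alt \<times> nat \<Rightarrow> nat" where
  "ralpha x = (if x = (A,2) then 4 else if x = (A,1) then 3 else if x = (B,2) then 2 else 1)"
definition rbeta :: "alt \<times> nat \<Rightarrow> nat" where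
  "rbeta x = (if x = (B,2) then 4 else if x = (B,1) then 3 else if x = (A,2) then 2 else 1)"

lemma outcomes2: "x \<in> outcomes 2 \<longleftrightarrow> x = (A,1) \<or> x = (A,2) \<or> x = (B,1) \<or> x = (B,2)"
proof (cases x)
  case (Pair s k)
  then show ?thesis by (cases s) (auto simp: outcomes_def)
qed

lemma st_mk:
  assumes "\<And>x y. x \<in> outcomes 2 \<Longrightarrow> y \<in> outcomes 2 \<Longrightarrow> x \<noteq> y \<Longrightarrow> r x \<noteq> r y"
  shows "strict_total 2 (mk r)"
  unfolding strict_total_def
proof (intro conjI allI impI ballI)
  fix x y assume "x \<in> outcomes 2" "y \<in> outcomes 2" "x \<noteq> y"
  then have "r x \<noteq> r y" using assms by blast
  then show "mk r x y \<or> mk r y x" using \<open>x \<in> outcomes 2\<close> \<open>y \<in> outcomes 2\<close>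
    unfolding mk_def by linarith
qed (auto simp: mk_def)

lemma mono_mk:
  assumes "\<And>x y. x \<in> outcomes 2 \<Longrightarrow> y \<in> outcomes 2 \<Longrightarrow> x \<noteq> y \<Longrightarrow> r x \<noteq> r y"
    and "r (A,1) < r (A,2)" and "r (B,1) < r (B,2)"
  shows "monotonic 2 (mk r)"
  unfolding monotonic_def
proof (intro conjI allI impI)
  show "strict_total 2 (mk r)" using st_mk assms(1) by blast
  fix S j k assume h: "1 \<le> k" "k < (j::nat)" "j \<le> 2"
  then have "k = 1" "j = 2" by auto
  then show "mk r (S, j) (S, k)" using assms(2,3)
    by (cases S) (auto simp: mk_def outcomes2)
qed

lemma inj_ra: "x \<in> outcomes 2 \<Longrightarrow> y \<in> outcomes 2 \<Longrightarrow> x \<noteq> y \<Longrightarrow> ra x \<noteq> ra y"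
  by (auto simp: outcomes2 ra_def)
lemma inj_rb: "x \<in> outcomes 2 \<Longrightarrow> y \<in> outcomes 2 \<Longrightarrow> x \<noteq> y \<Longrightarrow> rb x \<noteq> rb y"
  by (auto simp: outcomes2 rb_def)
lemma inj_ralpha: "x \<in> outcomes 2 \<Longrightarrow> y \<in> outcomes 2 \<Longrightarrow> x \<noteq> y \<Longrightarrow> ralpha x \<noteq> ralpha y"
  by (auto simp: outcomes2 ralpha_def)
lemma inj_rbeta: "x \<in> outcomes 2 \<Longrightarrow> y \<in> outcomes 2 \<Longrightarrow> x \<noteq> y \<Longrightarrow> rbeta x \<noteq> rbeta y"
  by (auto simp: outcomes2 rbeta_def)

lemma mon_a: "monotonic 2 (mk ra)" by (rule mono_mk[OF inj_ra]) (auto simp: ra_def)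
lemma mon_b: "monotonic 2 (mk rb)" by (rule mono_mk[OF inj_rb]) (auto simp: rb_def)
lemma mon_alpha: "monotonic 2 (mk ralpha)" by (rule mono_mk[OF inj_ralpha]) (auto simp: ralpha_def)
lemma mon_beta: "monotonic 2 (mk rbeta)" by (rule mono_mk[OF inj_rbeta]) (auto simp: rbeta_def)

lemma cs2: "comm_size 2 f i = (if f 0 = f i then 1 else 0) + (if f 1 = f i then 1 else 0)"
proof -
  have "{j. j < 2 \<and> f j = f i} = (if f 0 = f i then {0} else {}) \<union> (if f 1 = f i then {1} else {})"
    unfolding less_2_cases_iff by (auto; metis gr0I)
  then show ?thesis unfolding comm_size_def by auto
qed

lemma stable2: "stable [p,q] f \<longleftrightarrow> \<not> (\<exists>f'. (f' 0 \<noteq> f 0 \<or> f' 1 \<noteq> f 1) \<and>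
   (f' 0 \<noteq> f 0 \<longrightarrow> prefers p 2 f' f 0) \<and> (f' 1 \<noteq> f 1 \<longrightarrow> prefers q 2 f' f 1))"
proof -
  have a: "\<And>P. (\<forall>i<(2::nat). P i) \<longleftrightarrow> P 0 \<and> P 1" by (auto simp: less_2_cases_iff)
  have e: "\<And>P. (\<exists>i<(2::nat). P i) \<longleftrightarrow> P 0 \<or> P 1" by (auto simp: less_2_cases_iff)
  have l: "length [p,q] = 2" by simp
  show ?thesis unfolding stable_def l a e by auto
qed

lemma altE: "(x = A \<Longrightarrow> P) \<Longrightarrow> (x = B \<Longrightarrow> P) \<Longrightarrow> P" by (cases x) auto

lemmas evs = prefers_def cs2 mk_def outcomes2 ra_def rb_def ralpha_def rbeta_def

lemma all2: "(\<forall>i<(2::nat). P i) \<longleftrightarrow> P 0 \<and> P 1" by (auto simp: less_2_cases_iff)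
lemma len2: "length [p, q] = 2" by simp
lemma nth1: "[p, q] ! 1 = q" by simp

lemma prof_mk: "monotonic 2 p \<Longrightarrow> monotonic 2 q \<Longrightarrow> is_profile [p, q]"
  unfolding is_profile_def len2 all2 nth1 monotonic_def by simp
lemma dom0: "[mk ra, mk rb] \<in> MI_domain"
  using mon_a mon_b
  unfolding MI_domain_def mem_Collect_eq len2 all2 nth1 is_profile_def
  by (auto simp: monotonic_def minimally_interleaving_def mk_def outcomes2 ra_def rb_def)

lemma prof1: "is_profile [mk ralpha, mk rb]" by (rule prof_mk[OF mon_alpha mon_b])
lemma prof2: "is_profile [mk ra, mk rbeta]" by (rule prof_mk[OF mon_a mon_beta])

lemma unst: "f' 0 \<noteq> f 0 \<or> f' 1 \<noteq> f 1 \<Longrightarrow> (f' 0 \<noteq> f 0 \<longrightarrow> prefers p 2 f' f 0) \<Longrightarrow>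
   (f' 1 \<noteq> f 1 \<longrightarrow> prefers q 2 f' f 1) \<Longrightarrow> \<not> stable [p,q] f"
  unfolding stable2 by blast

lemma st0: "stable [mk ra, mk rb] (\<lambda>_. A)"
  unfolding stable2
proof
  assume "\<exists>f'. (f' 0 \<noteq> A \<or> f' 1 \<noteq> A) \<and> (f' 0 \<noteq> A \<longrightarrow> prefers (mk ra) 2 f' (\<lambda>_. A) 0) \<and>
      (f' 1 \<noteq> A \<longrightarrow> prefers (mk rb) 2 f' (\<lambda>_. A) 1)"
  then obtain f' where h: "(f' 0 \<noteq> A \<or> f' 1 \<noteq> A)" "(f' 0 \<noteq> A \<longrightarrow> prefers (mk ra) 2 f' (\<lambda>_. A) 0)"
      "(f' 1 \<noteq> A \<longrightarrow> prefers (mk rb) 2 f' (\<lambda>_. A) 1)" by blast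
  show False
    by (rule altE[of "f' 0"]; rule altE[of "f' 1"]) (use h in \<open>auto simp: evs\<close>)
qed

lemma st0_eq: "stable [mk ra, mk rb] f \<Longrightarrow> f 0 = f 1"
proof (rule ccontr)
  assume st: "stable [mk ra, mk rb] f" and ne: "f 0 \<noteq> f 1"
  show False
  proof (rule altE[of "f 0"])
    assume "f 0 = A"
    then have "f 1 = B" using ne by (cases "f 1") auto
    then show False using st unst[of "\<lambda>_. B" f "mk ra" "mk rb"] \<open>f 0 = A\<close> by (simp add: evs)
  next
    assume "f 0 = B"
    then have "f 1 = A" using ne by (cases "f 1") auto
    then show False using st unst[of "\<lambda>_. A" f "mk ra" "mk rb"] \<open>f 0 = B\<close> by (simp add: evs)
  qed
qed

lemma st1: "stable [mk ralpha, mk rb] (\<lambda>_. A)"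
  unfolding stable2
proof
  assume "\<exists>f'. (f' 0 \<noteq> A \<or> f' 1 \<noteq> A) \<and> (f' 0 \<noteq> A \<longrightarrow> prefers (mk ralpha) 2 f' (\<lambda>_. A) 0) \<and>
      (f' 1 \<noteq> A \<longrightarrow> prefers (mk rb) 2 f' (\<lambda>_. A) 1)"
  then obtain f' where h: "(f' 0 \<noteq> A \<or> f' 1 \<noteq> A)" "(f' 0 \<noteq> A \<longrightarrow> prefers (mk ralpha) 2 f' (\<lambda>_. A) 0)"
      "(f' 1 \<noteq> A \<longrightarrow> prefers (mk rb) 2 f' (\<lambda>_. A) 1)" by blast
  show False
    by (rule altE[of "f' 0"]; rule altE[of "f' 1"]) (use h in \<open>auto simp: evs\<close>)
qed

lemma st1_eq: "stable [mk ralpha, mk rb] f \<Longrightarrow> f 0 = A \<and> f 1 = A"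
proof (rule ccontr)
  assume st: "stable [mk ralpha, mk rb] f" and ne: "\<not> (f 0 = A \<and> f 1 = A)"
  show False
  proof (rule altE[of "f 0"]; rule altE[of "f 1"])
    assume "f 0 = A" "f 1 = A" then show False using ne by simp
  next
    assume "f 0 = A" "f 1 = B"
    then show False using st unst[of "\<lambda>_. A" f "mk ralpha" "mk rb"] by (simp add: evs)
  next
    assume "f 0 = B" "f 1 = A"
    then show False using st unst[of "\<lambda>_. A" f "mk ralpha" "mk rb"] by (simp add: evs)
  next
    assume "f 0 = B" "f 1 = B"
    then show False using st unst[of "\<lambda>i. if i = 0 then A else B" f "mk ralpha" "mk rb"] by (simp add: evs)
  qed
qed

lemma st2: "stable [mk ra, mk rbeta] (\<lambda>_. B)"
  unfolding stable2
proof
  assume "\<exists>f'. (f' 0 \<noteq> B \<or> f' 1 \<noteq> B) \<and> (f' 0 \<noteq> B \<longrightarrow> prefers (mk ra) 2 f' (\<lambda>_. B) 0) \<and>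
      (f' 1 \<noteq> B \<longrightarrow> prefers (mk rbeta) 2 f' (\<lambda>_. B) 1)"
  then obtain f' where h: "(f' 0 \<noteq> B \<or> f' 1 \<noteq> B)" "(f' 0 \<noteq> B \<longrightarrow> prefers (mk ra) 2 f' (\<lambda>_. B) 0)"
      "(f' 1 \<noteq> B \<longrightarrow> prefers (mk rbeta) 2 f' (\<lambda>_. B) 1)" by blast
  show False
    by (rule altE[of "f' 0"]; rule altE[of "f' 1"]) (use h in \<open>auto simp: evs\<close>)
qed

lemma st2_eq: "stable [mk ra, mk rbeta] f \<Longrightarrow> f 0 = B \<and> f 1 = B"
proof (rule ccontr)
  assume st: "stable [mk ra, mk rbeta] f" and ne: "\<not> (f 0 = B \<and> f 1 = B)"
  show False
  proof (rule altE[of "f 0"]; rule altE[of "f 1"])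
    assume "f 0 = B" "f 1 = B" then show False using ne by simp
  next
    assume "f 0 = A" "f 1 = B"
    then show False using st unst[of "\<lambda>_. B" f "mk ra" "mk rbeta"] by (simp add: evs)
  next
    assume "f 0 = B" "f 1 = A"
    then show False using st unst[of "\<lambda>_. B" f "mk ra" "mk rbeta"] by (simp add: evs)
  next
    assume "f 0 = A" "f 1 = A"
    then show False using st unst[of "\<lambda>i. if i = 0 then A else B" f "mk ra" "mk rbeta"] by (simp add: evs)
  qed
qed

theorem mainTheorem8:
  shows "\<not> (\<exists>R :: rule. stable_rule R \<and> strategyproof R MI_domain)"
proof
  assume "\<exists>R :: rule. stable_rule R \<and> strategyproof R MI_domain"
  then obtain R where sr: "stable_rule R" and sp: "strategyproof R MI_domain" by blast
  have d0: "is_profile [mk ra, mk rb]" using dom0 by (simp add: MI_domain_def)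
  have s0: "stable [mk ra, mk rb] (R [mk ra, mk rb])" using sr d0 st0 unfolding stable_rule_def by blast
  have s1: "stable [mk ralpha, mk rb] (R [mk ralpha, mk rb])" using sr prof1 st1 unfolding stable_rule_def by blast
  have s2: "stable [mk ra, mk rbeta] (R [mk ra, mk rbeta])" using sr prof2 st2 unfolding stable_rule_def by blast
  have e0: "R [mk ra, mk rb] 0 = R [mk ra, mk rb] 1" using st0_eq[OF s0] .
  have e1: "R [mk ralpha, mk rb] 0 = A" "R [mk ralpha, mk rb] 1 = A" using st1_eq[OF s1] by auto
  have e2: "R [mk ra, mk rbeta] 0 = B" "R [mk ra, mk rbeta] 1 = B" using st2_eq[OF s2] by auto
  have spd: "\<And>V i q. V \<in> MI_domain \<Longrightarrow> i < length V \<Longrightarrow> monotonic (length V) q \<Longrightarrow>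
      \<not> prefers (V ! i) (length V) (R (V[i := q])) (R V) i"
    using sp unfolding strategyproof_def by blast
  have n1: "\<not> prefers (mk ra) 2 (R [mk ralpha, mk rb]) (R [mk ra, mk rb]) 0"
    using spd[OF dom0, of 0 "mk ralpha"] mon_alpha by (simp add: numeral_2_eq_2)
  have n2: "\<not> prefers (mk rb) 2 (R [mk ra, mk rbeta]) (R [mk ra, mk rb]) 1"
    using spd[OF dom0, of 1 "mk rbeta"] mon_beta by (simp add: numeral_2_eq_2)
  show False
  proof (rule altE[of "R [mk ra, mk rb] 0"])
    assume "R [mk ra, mk rb] 0 = A"
    then show False using n2 e0 e2 by (simp add: evs)
  next
    assume "R [mk ra, mk rb] 0 = B"
    then show False using n1 e0 e1 by (simp add: evs)
  qed
qed

end
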